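(* Let $(\xi_j)_{j\ge 0}$ be independent, identically distributed random variables taking values in $\{-1,0,1\}$ with $\max_{x\in\{-1,0,1\}} \mathbb{P}(\xi_0 = x) < \frac{1}{\sqrt{3}}$, and for $n\ge 1$ let $P(z):=\sum_{j=0}^n \xi_j z^j$. For every algebraic integer $\alpha\neq 0$, \[\mathbb{P}(\alpha\text{ is a root of } P)\le \exp\left(-\frac{n\log 3}{2\lceil \log 3 /|\log|\alpha||\rceil}\right).\]
   Context: When $|\alpha|=1$ the right-hand side is interpreted as $1$ (the ceiling being infinite). *)

theory Defs
  imports "HOL-Analysis.Analysis" "HOL-Probability.Probability" "HOL-Computational_Algebra.Polynomial"
begin

end

theory Submission
  imports Defs
begin

lemma geo_bound:
  fixes r :: real assumes "r \<ge> 3"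
  shows "2 * (\<Sum>i<m. r^i) \<le> r^m - 1"
proof (induction m)
  case 0 then show ?case by simp
next
  case (Suc m)
  have "r^m \<ge> 1" using assms by (simp add: one_le_power)
  have "2 * (\<Sum>i<Suc m. r^i) = 2 * (\<Sum>i<m. r^i) + 2 * r^m" by simp
  also have "\<dots> \<le> 3 * r^m - 1" using Suc by simp
  also have "\<dots> \<le> r * r^m - 1" using mult_right_mono[OF assms, of "r^m"] \<open>r^m \<ge> 1\<close> by linarith
  finally show ?case by simp
qed

lemma digits_big:
  fixes \<beta> :: complex and d :: "nat \<Rightarrow> int"
  assumes "cmod \<beta> \<ge> 3" "\<forall>i\<le>m. \<bar>d i\<bar> \<le> 2" "(\<Sum>i\<le>m. of_int (d i) * \<beta>^i) = 0"
  shows "\<forall>i\<le>m. d i = 0"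
  using assms(2,3)
proof (induction m)
  case 0 then show ?case by simp
next
  case (Suc m)
  let ?r = "cmod \<beta>"
  have b: "norm (\<Sum>i\<le>m. of_int (d i) * \<beta>^i) \<le> (\<Sum>i\<le>m. 2 * ?r^i)"
  proof -
    have "norm (\<Sum>i\<le>m. of_int (d i) * \<beta>^i) \<le> (\<Sum>i\<le>m. norm (of_int (d i) * \<beta>^i))"
      by (rule norm_sum)
    also have "\<dots> \<le> (\<Sum>i\<le>m. 2 * ?r^i)"
    proof (rule sum_mono)
      fix i assume "i \<in> {..m}"
      then have "\<bar>d i\<bar> \<le> 2" using Suc.prems(1) by auto
      then have "real_of_int \<bar>d i\<bar> \<le> 2" by linarith
      moreover have "norm (of_int (d i) * \<beta>^i) = real_of_int \<bar>d i\<bar> * ?r^i"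
        by (simp add: norm_mult norm_power)
      ultimately show "norm (of_int (d i) * \<beta>^i) \<le> 2 * ?r^i"
        by (simp add: mult_right_mono[of _ 2 "?r^i"])
    qed
    finally show ?thesis .
  qed
  have "(\<Sum>i\<le>m. 2 * ?r^i) = 2 * (\<Sum>i<Suc m. ?r^i)"
    by (simp add: sum_distrib_left lessThan_Suc_atMost)
  also have "\<dots> \<le> ?r^Suc m - 1" by (rule geo_bound[OF assms(1)])
  finally have b2: "norm (\<Sum>i\<le>m. of_int (d i) * \<beta>^i) < ?r^Suc m" using b by linarith
  have top: "d (Suc m) = 0"
  proof (rule ccontr)
    assume nz: "d (Suc m) \<noteq> 0"
    have "(\<Sum>i\<le>m. of_int (d i) * \<beta>^i) = - (of_int (d (Suc m)) * \<beta>^Suc m)"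
      using Suc.prems(2) by (simp add: add_eq_0_iff)
    then have "norm (\<Sum>i\<le>m. of_int (d i) * \<beta>^i) = real_of_int \<bar>d (Suc m)\<bar> * ?r^Suc m"
      by (simp add: norm_mult norm_power)
    moreover have "real_of_int \<bar>d (Suc m)\<bar> \<ge> 1" using nz by linarith
    ultimately have "norm (\<Sum>i\<le>m. of_int (d i) * \<beta>^i) \<ge> ?r^Suc m"
      by (metis norm_ge_zero zero_le_power mult_right_mono mult_1)
    with b2 show False by linarith
  qed
  have s0: "(\<Sum>i\<le>m. of_int (d i) * \<beta>^i) = 0" using Suc.prems(2) top by simp
  have p1: "\<forall>i\<le>m. \<bar>d i\<bar> \<le> 2" using Suc.prems(1) by simp
  have ih: "\<forall>i\<le>m. d i = 0" by (rule Suc.IH[OF p1 s0])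
  show ?case
  proof (intro allI impI)
    fix i assume "i \<le> Suc m"
    then have "i \<le> m \<or> i = Suc m" by linarith
    then show "d i = 0" using ih top by blast
  qed
qed

lemma digits_small:
  fixes \<beta> :: complex and d :: "nat \<Rightarrow> int"
  assumes "cmod \<beta> \<le> 1/3" "\<beta> \<noteq> 0" "\<forall>i\<le>m. \<bar>d i\<bar> \<le> 2" "(\<Sum>i\<le>m. of_int (d i) * \<beta>^i) = 0"
  shows "\<forall>i\<le>m. d i = 0"
proof -
  define \<gamma> where "\<gamma> = inverse \<beta>"
  have pos: "cmod \<beta> > 0" using assms(2) by simp
  have "cmod \<gamma> = 1 / cmod \<beta>" unfolding \<gamma>_def by (simp add: norm_inverse divide_inverse)
  then have g: "cmod \<gamma> \<ge> 3" using assms(1) pos by (simp add: le_divide_eq mult.commute)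
  have "(\<Sum>i\<le>m. of_int (d (m - i)) * \<gamma>^i) = (\<Sum>i\<le>m. of_int (d i) * \<gamma>^(m - i))"
    using sum.atLeastAtMost_rev[of "\<lambda>i. of_int (d (m - i)) * \<gamma>^i" 0 m]
    by (simp add: atMost_atLeast0)
  also have "\<dots> = (\<Sum>i\<le>m. \<gamma>^m * (of_int (d i) * \<beta>^i))"
  proof (rule sum.cong[OF refl])
    fix i assume "i \<in> {..m}"
    then have "m = (m - i) + i" by simp
    then have e1: "\<gamma>^m = \<gamma>^(m-i) * \<gamma>^i" by (metis power_add)
    have gb: "\<gamma> * \<beta> = 1" using assms(2) unfolding \<gamma>_def by simp
    have "\<gamma>^i * \<beta>^i = (\<gamma> * \<beta>)^i" by (simp only: power_mult_distrib)
    then have e2: "\<gamma>^i * \<beta>^i = 1" using gb by simp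
    have H: "\<gamma>^m * (of_int (d i) * \<beta>^i) = of_int (d i) * \<gamma>^(m-i) * (\<gamma>^i * \<beta>^i)"
      unfolding e1 by (simp only: mult_ac)
    from H[unfolded e2 mult_1_right]
    show "of_int (d i) * \<gamma>^(m - i) = \<gamma>^m * (of_int (d i) * \<beta>^i)"
      by (rule sym)
  qed
  also have "\<dots> = 0" using assms(4) by (simp add: sum_distrib_left[symmetric])
  finally have sr: "(\<Sum>i\<le>m. of_int (d (m - i)) * \<gamma>^i) = 0" .
  have br: "\<forall>i\<le>m. \<bar>d (m - i)\<bar> \<le> 2" using assms(3) by simp
  have "\<forall>i\<le>m. d (m - i) = 0" by (rule digits_big[OF g br sr])
  then show ?thesis
  proof (intro allI impI)
    fix i assume "\<forall>i\<le>m. d (m - i) = 0" "i \<le> m"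
    have "m - i \<le> m" by simp
    then have "d (m - (m - i)) = 0" using \<open>\<forall>i\<le>m. d (m - i) = 0\<close> by blast
    moreover have "m - (m - i) = i" using \<open>i \<le> m\<close> by simp
    ultimately show "d i = 0" by simp
  qed
qed

lemma prob_bind_le:
  assumes "\<And>x. x \<in> set_pmf M \<Longrightarrow> measure_pmf.prob (N x) X \<le> c" "c \<ge> 0"
  shows "measure_pmf.prob (bind_pmf M N) X \<le> c"
proof -
  have "emeasure (bind_pmf M N) X = (\<integral>\<^sup>+x. emeasure (N x) X \<partial>M)" by simp
  also have "\<dots> \<le> (\<integral>\<^sup>+x. ennreal c \<partial>M)"
    by (intro nn_integral_mono_AE AE_pmfI)
       (simp add: measure_pmf.emeasure_eq_measure assms)
  also have "\<dots> = ennreal c" by simp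
  finally show ?thesis using assms(2)
    by (simp add: measure_pmf.emeasure_eq_measure)
qed

lemma prob_unique_le:
  assumes "\<And>x y. x \<in> X \<inter> set_pmf M \<Longrightarrow> y \<in> X \<inter> set_pmf M \<Longrightarrow> x = y"
    "\<And>x. pmf M x \<le> c"
  shows "measure_pmf.prob M X \<le> c"
proof (cases "X \<inter> set_pmf M = {}")
  case True
  then have "measure_pmf.prob M X = 0"
    by (metis measure_Int_set_pmf measure_empty)
  moreover have "c \<ge> 0" using assms(2)[of undefined] pmf_nonneg[of M undefined] by linarith
  ultimately show ?thesis by simp
next
  case False
  then obtain x where x: "x \<in> X \<inter> set_pmf M" by blast
  then have "X \<inter> set_pmf M = {x}" using assms(1) by blast
  then have "measure_pmf.prob M X = pmf M x"
    by (metis measure_Int_set_pmf measure_pmf_single)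
  then show ?thesis using assms(2) by simp
qed

theorem lemma1p5:
  fixes p :: "int pmf" and n :: nat and \<alpha> :: complex
  assumes "set_pmf p \<subseteq> {-1, 0, 1}"
    and "\<forall>x\<in>{-1, 0, 1}. pmf p x < 1 / sqrt 3"
    and "n \<ge> 1"
    and "algebraic_int \<alpha>" and "\<alpha> \<noteq> 0"
  shows "measure_pmf.prob (Pi_pmf {..n} 0 (\<lambda>_. p))
           {\<xi>. (\<Sum>j\<le>n. of_int (\<xi> j) * \<alpha> ^ j) = 0}
         \<le> (if cmod \<alpha> = 1 then 1
            else exp (- (real n * ln 3) / (2 * real_of_int \<lceil>ln 3 / \<bar>ln (cmod \<alpha>)\<bar>\<rceil>)))"
proof (cases "cmod \<alpha> = 1")
  case True
  then show ?thesis by simp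
next
  case False
  define a where "a = \<bar>ln (cmod \<alpha>)\<bar>"
  have cpos: "cmod \<alpha> > 0" using assms(5) by simp
  have apos: "a > 0" unfolding a_def using False cpos by simp
  define K where "K = \<lceil>ln 3 / a\<rceil>"
  have l3: "ln (3::real) > 0" by simp
  have qpos: "ln 3 / a > 0" using apos l3 by simp
  have qK: "ln 3 / a \<le> real_of_int K" unfolding K_def by (rule le_of_int_ceiling)
  have K1: "K \<ge> 1" using qpos qK by linarith
  define k where "k = nat K"
  have kpos: "k \<ge> 1" using K1 unfolding k_def by simp
  have kK: "real k = real_of_int K" using K1 unfolding k_def by simp
  have ka: "real k * a \<ge> ln 3" using qK apos kK by (simp add: pos_divide_le_eq)
  define \<beta> where "\<beta> = \<alpha> ^ k"
  have bnz: "\<beta> \<noteq> 0" unfolding \<beta>_def using assms(5) by simp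
  have bnorm: "cmod \<beta> = cmod \<alpha> ^ k" unfolding \<beta>_def by (simp add: norm_power)
  have bpos: "cmod \<beta> > 0" using bnz by simp
  have lnb: "ln (cmod \<beta>) = real k * ln (cmod \<alpha>)" using bnorm by (simp add: ln_realpow)
  have bcase: "cmod \<beta> \<ge> 3 \<or> cmod \<beta> \<le> 1/3"
  proof (cases "ln (cmod \<alpha>) > 0")
    case True
    then have "ln (cmod \<beta>) \<ge> ln 3" using lnb ka a_def by simp
    then have "cmod \<beta> \<ge> 3" using bpos by simp
    then show ?thesis by simp
  next
    case False
    then have "ln (cmod \<beta>) \<le> - ln 3" using lnb ka a_def by simp
    also have "- ln 3 = ln (1/3::real)" by (simp add: ln_div)
    finally have "cmod \<beta> \<le> 1/3" using bpos by simp
    then show ?thesis by simp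
  qed
  have digits: "\<forall>i\<le>m. d i = 0" if "\<forall>i\<le>m. \<bar>d i\<bar> \<le> 2" "(\<Sum>i\<le>m. of_int (d i) * \<beta>^i) = 0"
    for m and d :: "nat \<Rightarrow> int"
    using bcase digits_big[of \<beta> m d] digits_small[of \<beta> m d] that bnz by blast
  define m where "m = n div k"
  define S where "S = (\<lambda>i. i * k) ` {..m}"
  define T where "T = {..n} - S"
  have mk: "m * k \<le> n" unfolding m_def by simp
  have Ssub: "S \<subseteq> {..n}"
  proof
    fix x assume "x \<in> S"
    then obtain i where "i \<le> m" "x = i * k" unfolding S_def by auto
    then have "x \<le> m * k" by simp
    then show "x \<in> {..n}" using mk by simp
  qed
  have injk: "inj_on (\<lambda>i. i * k) {..m}" using kpos by (simp add: inj_on_def)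
  have cardS: "card S = Suc m" unfolding S_def using card_image[OF injk] by simp
  have finS: "finite S" unfolding S_def by simp
  have finT: "finite T" unfolding T_def by simp
  define h where "h = (\<lambda>(f, g) x. if x \<in> T then f x else (g x :: int))"
  define E where "E = {\<xi> :: nat \<Rightarrow> int. (\<Sum>j\<le>n. of_int (\<xi> j) * \<alpha> ^ j) = 0}"
  have TS: "T \<union> S = {..n}" unfolding T_def using Ssub by blast
  have disj: "T \<inter> S = {}" unfolding T_def by blast
  have decomp: "Pi_pmf {..n} 0 (\<lambda>_. p) = map_pmf h (pair_pmf (Pi_pmf T 0 (\<lambda>_. p)) (Pi_pmf S 0 (\<lambda>_. p)))"
    unfolding h_def TS[symmetric] by (rule Pi_pmf_union[OF finT finS disj])
  have pmfle: "pmf p x \<le> 1 / sqrt 3" for x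
  proof (cases "x \<in> {-1, 0, 1}")
    case True
    then have "pmf p x < 1 / sqrt 3" using assms(2) by blast
    then show ?thesis by (rule less_imp_le)
  next
    case False
    then have "x \<notin> set_pmf p" using assms(1) by blast
    then have "pmf p x = 0" by (simp add: set_pmf_eq)
    then show ?thesis by simp
  qed
  have pmfS: "pmf (Pi_pmf S 0 (\<lambda>_. p)) g \<le> (1 / sqrt 3) ^ Suc m" for g
  proof -
    have "(\<Prod>x\<in>S. pmf p (g x)) \<le> (\<Prod>x\<in>S. 1 / sqrt 3)"
      by (intro prod_mono) (simp add: pmfle)
    also have "\<dots> = (1 / sqrt 3) ^ Suc m" using cardS by simp
    finally show ?thesis by (simp add: pmf_Pi[OF finS])
  qed
  have inner: "measure_pmf.prob (Pi_pmf S 0 (\<lambda>_. p)) ((\<lambda>g. h (f, g)) -` E) \<le> (1 / sqrt 3) ^ Suc m" for f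
  proof (rule prob_unique_le[OF _ pmfS])
    fix g1 g2
    assume g1: "g1 \<in> (\<lambda>g. h (f, g)) -` E \<inter> set_pmf (Pi_pmf S 0 (\<lambda>_. p))"
      and g2: "g2 \<in> (\<lambda>g. h (f, g)) -` E \<inter> set_pmf (Pi_pmf S 0 (\<lambda>_. p))"
    have gp: "\<forall>x. (x \<in> S \<longrightarrow> g x \<in> {-1, 0, 1}) \<and> (x \<notin> S \<longrightarrow> g x = 0)"
      if "g \<in> set_pmf (Pi_pmf S 0 (\<lambda>_. p))" for g
      using set_Pi_pmf_subset'[OF finS, of 0 "\<lambda>_. p"] that assms(1)
      unfolding PiE_dflt_def by auto
        have gp1: "\<forall>x. (x \<in> S \<longrightarrow> g1 x \<in> {-1, 0, 1}) \<and> (x \<notin> S \<longrightarrow> g1 x = 0)"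
      using gp g1 by blast
    have gp2: "\<forall>x. (x \<in> S \<longrightarrow> g2 x \<in> {-1, 0, 1}) \<and> (x \<notin> S \<longrightarrow> g2 x = 0)"
      using gp g2 by blast
    have E1: "(\<Sum>j\<le>n. of_int (h (f, g1) j) * \<alpha> ^ j) = 0" using g1 unfolding E_def by simp
    have E2: "(\<Sum>j\<le>n. of_int (h (f, g2) j) * \<alpha> ^ j) = 0" using g2 unfolding E_def by simp
    define F where "F = (\<lambda>j. of_int (g1 j - g2 j) * \<alpha> ^ j)"
    have "(\<Sum>j\<le>n. F j) = (\<Sum>j\<le>n. of_int (h (f, g1) j) * \<alpha> ^ j - of_int (h (f, g2) j) * \<alpha> ^ j)"
    proof (rule sum.cong[OF refl])
      fix j assume "j \<in> {..n}"
      show "F j = of_int (h (f, g1) j) * \<alpha> ^ j - of_int (h (f, g2) j) * \<alpha> ^ j"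
      proof (cases "j \<in> T")
        case True
        then have "j \<notin> S" unfolding T_def by simp
        then have "g1 j = 0" "g2 j = 0" using gp1 gp2 by blast+
        then show ?thesis using True unfolding F_def h_def by simp
      next
        case False
        then show ?thesis unfolding F_def h_def by (simp add: algebra_simps)
      qed
    qed
    also have "\<dots> = 0" using E1 E2 by (simp add: sum_subtractf)
    finally have s0: "(\<Sum>j\<le>n. F j) = 0" .
    have "(\<Sum>j\<le>n. F j) = (\<Sum>j\<in>S. F j)"
    proof (rule sum.mono_neutral_right[OF _ Ssub])
      show "finite {..n}" by simp
      show "\<forall>i\<in>{..n} - S. F i = 0"
      proof
        fix i assume "i \<in> {..n} - S"
        then have "g1 i = 0" "g2 i = 0" using gp1 gp2 by blast+
        then show "F i = 0" unfolding F_def by simp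
      qed
    qed
    also have "\<dots> = (\<Sum>i\<le>m. F (i * k))" unfolding S_def by (rule sum.reindex[OF injk, unfolded o_def])
    also have "\<dots> = (\<Sum>i\<le>m. of_int (g1 (i * k) - g2 (i * k)) * \<beta> ^ i)"
          proof (rule sum.cong[OF refl])
      fix i
      have "\<alpha> ^ (i * k) = (\<alpha> ^ k) ^ i" by (simp only: mult.commute[of i k] power_mult)
      then show "F (i * k) = of_int (g1 (i * k) - g2 (i * k)) * \<beta> ^ i" unfolding F_def \<beta>_def by simp
    qed
    finally have s1: "(\<Sum>i\<le>m. of_int (g1 (i * k) - g2 (i * k)) * \<beta> ^ i) = 0" using s0 by simp
    have bd: "\<forall>i\<le>m. \<bar>g1 (i * k) - g2 (i * k)\<bar> \<le> 2"
    proof (intro allI impI)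
      fix i assume "i \<le> m"
      then have "i * k \<in> S" unfolding S_def by auto
      then have "g1 (i*k) \<in> {-1, 0, 1}" "g2 (i*k) \<in> {-1, 0, 1}" using gp1 gp2 by blast+
      then show "\<bar>g1 (i * k) - g2 (i * k)\<bar> \<le> 2" by auto
    qed
    have z: "\<forall>i\<le>m. g1 (i * k) - g2 (i * k) = 0" by (rule digits[OF bd s1])
    show "g1 = g2"
    proof
      fix x show "g1 x = g2 x"
      proof (cases "x \<in> S")
        case True
        then obtain i where "i \<le> m" "x = i * k" unfolding S_def by auto
        then show ?thesis using z by simp
      next
        case False
        then show ?thesis using gp1 gp2 by simp
      qed
    qed
  qed
  have pairb: "pair_pmf (Pi_pmf T 0 (\<lambda>_. p)) (Pi_pmf S 0 (\<lambda>_. p))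
      = bind_pmf (Pi_pmf T 0 (\<lambda>_. p)) (\<lambda>f. map_pmf (\<lambda>g. (f, g)) (Pi_pmf S 0 (\<lambda>_. p)))"
    unfolding pair_pmf_def map_pmf_def by simp
  have main: "measure_pmf.prob (Pi_pmf {..n} 0 (\<lambda>_. p)) E \<le> (1 / sqrt 3) ^ Suc m"
  proof -
    have "measure_pmf.prob (Pi_pmf {..n} 0 (\<lambda>_. p)) E
        = measure_pmf.prob (bind_pmf (Pi_pmf T 0 (\<lambda>_. p)) (\<lambda>f. map_pmf (\<lambda>g. (f, g)) (Pi_pmf S 0 (\<lambda>_. p)))) (h -` E)"
      using decomp pairb by simp
    also have "\<dots> \<le> (1 / sqrt 3) ^ Suc m"
    proof (rule prob_bind_le)
      fix f
      have "(\<lambda>g. (f, g)) -` h -` E = (\<lambda>g. h (f, g)) -` E" by auto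
      then show "measure_pmf.prob (map_pmf (\<lambda>g. (f, g)) (Pi_pmf S 0 (\<lambda>_. p))) (h -` E) \<le> (1 / sqrt 3) ^ Suc m"
        using inner[of f] by simp
    qed simp
    finally show ?thesis .
  qed
  have num: "(1 / sqrt 3) ^ Suc m \<le> exp (- (real n * ln 3) / (2 * real_of_int K))"
  proof -
    have "n mod k < k" using kpos by simp
    moreover have "n = m * k + n mod k" unfolding m_def by simp
    ultimately have "n < Suc m * k" by simp
    then have nk: "real n \<le> real (Suc m) * real k" by (metis of_nat_le_iff of_nat_mult less_imp_le)
    have kp: "real k > 0" using kpos by simp
    have pz: "(1 / sqrt 3 :: real) ^ Suc m > 0" by simp
    have "(1 / sqrt 3) ^ Suc m = exp (ln ((1 / sqrt 3 :: real) ^ Suc m))" using pz by simp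
    also have "ln ((1 / sqrt 3 :: real) ^ Suc m) = real (Suc m) * ln (1 / sqrt 3)" by (rule ln_realpow)
    also have "ln (1 / sqrt 3) = - ln 3 / 2" by (simp add: ln_div ln_sqrt)
    also have "exp (real (Suc m) * (- ln 3 / 2)) \<le> exp (- (real n * ln 3) / (2 * real_of_int K))"
    proof -
      have "real n * ln 3 \<le> real (Suc m) * real k * ln 3" using nk l3 by (simp add: mult_right_mono)
      then have "real n * ln 3 / (2 * real k) \<le> real (Suc m) * ln 3 / 2" using kp
        by (simp add: field_simps)
      then show ?thesis using kK by simp
    qed
    finally show ?thesis .
  qed
  show ?thesis using main num False unfolding E_def K_def a_def by simp
qed

end
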